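(* Let $(F,\|\cdot\|)$ be a normed space, $(a_{ij})_{i,j\le n}$ a symmetric matrix with entries in $F$, $g_1,\dots,g_n$ i.i.d. $\mathcal N(0,1)$ random variables, and $p\ge1$. Let $W= \|\sum_{i\neq j}a_{ij}g_ig_j\|_p+\|\sum_{i}a_{ii}(g_i^2-1)\|_p$. Then \[ \frac{1}{3}W \leq \Big\|\sum_{i,j}a_{ij}(g_ig_j-\delta_{ij})\Big\|_p \leq W. \]
   Context: For an $F$-valued random variable $Z$, $\|Z\|_p=(\mathbb{E}\|Z\|^p)^{1/p}$. $\delta_{ij}$ is the Kronecker delta; sums run over $\{1,\dots,n\}$. *)

theory Defs
  imports "HOL-Probability.Probability"
begin

definition Lp_norm :: "'b measure \<Rightarrow> real \<Rightarrow> ('b \<Rightarrow> 'a::real_normed_vector) \<Rightarrow> real" where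
  "Lp_norm M p Z = (\<integral>x. norm (Z x) powr p \<partial>M) powr (1 / p)"

end

theory Submission
  imports Defs
begin


lemma powr_convex_ineq:
  fixes p x y t :: real
  assumes p: "p \<ge> 1" and x: "x \<ge> 0" and y: "y \<ge> 0" and t: "0 \<le> t" "t \<le> 1"
  shows "(t * x + (1 - t) * y) powr p \<le> t * x powr p + (1 - t) * y powr p"
proof -
  have pc: "convex_on {0<..} (\<lambda>x::real. x powr p)" by (rule powr_convex[OF p])
  have aux: "(s * z) powr p \<le> s * z powr p" if "0 \<le> s" "s \<le> 1" "z \<ge> 0" for s z :: real
  proof -
    have "s powr p \<le> s powr 1" using that p by (intro powr_mono') auto
    then have "s powr p \<le> s" using that by simp
    then have "s powr p * z powr p \<le> s * z powr p" by (intro mult_right_mono) auto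
    then show ?thesis using that by (simp add: powr_mult)
  qed
  show ?thesis
  proof (cases "x = 0")
    case True
    then show ?thesis using aux[of "1-t" y] t y p by simp
  next
    case xn: False
    show ?thesis
    proof (cases "y = 0")
      case True
      then show ?thesis using aux[of t x] t x p by simp
    next
      case False
      then have "x > 0" "y > 0" using x y xn by auto
      then show ?thesis
        using convex_onD[OF pc, of t y x] t by (simp add: algebra_simps)
    qed
  qed
qed

lemma convex_powr0: "p \<ge> 1 \<Longrightarrow> convex_on {0..} (\<lambda>x::real. x powr p)"
proof (rule convex_onI)
  fix t x y :: real
  assume "p \<ge> 1" "0 < t" "t < 1" "x \<in> {0..}" "y \<in> {0..}"
  then show "((1 - t) *\<^sub>R x + t *\<^sub>R y) powr p \<le> (1 - t) * x powr p + t * y powr p"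
    using powr_convex_ineq[of p y x t] by (simp add: algebra_simps)
qed auto

lemma jensen_avg_powr:
  fixes z :: "'i \<Rightarrow> real"
  assumes "finite K" "K \<noteq> {}" "p \<ge> 1" "\<And>k. k \<in> K \<Longrightarrow> z k \<ge> 0"
  shows "((\<Sum>k\<in>K. z k) / card K) powr p \<le> (\<Sum>k\<in>K. z k powr p) / card K"
proof -
  have c: "card K > 0" using assms by (simp add: card_gt_0_iff)
  have "(\<Sum>k\<in>K. (1 / card K) *\<^sub>R z k) powr p \<le> (\<Sum>k\<in>K. (1 / card K) * z k powr p)"
    using convex_on_sum[OF assms(1,2) convex_powr0[OF assms(3)], of "\<lambda>_. 1 / card K" z] c assms(4)
    by auto
  then show ?thesis by (simp add: sum_divide_distrib[symmetric] sum_distrib_left[symmetric])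
qed



lemma Lp_norm_nonneg: "Lp_norm M p X \<ge> 0"
  unfolding Lp_norm_def by simp

lemma Lp_norm_powr:
  assumes "p \<ge> 1"
  shows "Lp_norm M p X powr p = (\<integral>x. norm (X x) powr p \<partial>M)"
proof -
  have "(\<integral>x. norm (X x) powr p \<partial>M) \<ge> 0" by (simp add: Bochner_Integration.integral_nonneg)
  then show ?thesis using assms unfolding Lp_norm_def by (simp add: powr_powr)
qed

lemma minkowski:
  fixes X Y :: "'b \<Rightarrow> 'a::real_normed_vector"
  assumes p: "p \<ge> 1"
    and iX: "integrable M (\<lambda>x. norm (X x) powr p)"
    and iY: "integrable M (\<lambda>x. norm (Y x) powr p)"
    and iXY: "integrable M (\<lambda>x. norm (X x + Y x) powr p)"
  shows "Lp_norm M p (\<lambda>x. X x + Y x) \<le> Lp_norm M p X + Lp_norm M p Y"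
proof (rule field_le_epsilon)
  fix e :: real assume e: "0 < e"
  define a where "a = Lp_norm M p X"
  define b where "b = Lp_norm M p Y"
  define A where "A = a + e/2"
  define B where "B = b + e/2"
  have a0: "a \<ge> 0" "b \<ge> 0" unfolding a_def b_def by (auto intro: Lp_norm_nonneg)
  then have A0: "A > 0" "B > 0" using e unfolding A_def B_def by auto
  define t where "t = A / (A + B)"
  have t01: "0 \<le> t" "t \<le> 1" "1 - t = B / (A + B)" using A0 unfolding t_def by (auto simp: field_simps)
  have EX: "(\<integral>x. norm (X x) powr p \<partial>M) \<le> A powr p"
    unfolding Lp_norm_powr[OF p, symmetric] a_def[symmetric] using a0 A0 p
    by (intro powr_mono2) (auto simp: A_def e less_imp_le)
  have EY: "(\<integral>x. norm (Y x) powr p \<partial>M) \<le> B powr p"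
    unfolding Lp_norm_powr[OF p, symmetric] b_def[symmetric] using a0 A0 p
    by (intro powr_mono2) (auto simp: B_def e less_imp_le)
  define c1 where "c1 = (A + B) powr p * (t / A powr p)"
  define c2 where "c2 = (A + B) powr p * ((1 - t) / B powr p)"
  have pw: "norm (X x + Y x) powr p \<le> c1 * norm (X x) powr p + c2 * norm (Y x) powr p" for x
  proof -
    have "norm (X x + Y x) \<le> norm (X x) + norm (Y x)" by (rule norm_triangle_ineq)
    also have "\<dots> = (A + B) * (t * (norm (X x) / A) + (1 - t) * (norm (Y x) / B))"
    proof -
      have h1: "(A + B) * (t * (norm (X x) / A)) = norm (X x)"
        using A0 unfolding t_def by (metis add_pos_pos divide_divide_eq_left' nonzero_mult_div_cancel_left order_less_irrefl times_divide_eq_left times_divide_eq_right)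
      have h2: "(A + B) * ((1 - t) * (norm (Y x) / B)) = norm (Y x)"
        using A0 unfolding t01(3) by (metis add_pos_pos divide_divide_eq_left' nonzero_mult_div_cancel_left order_less_irrefl times_divide_eq_left times_divide_eq_right)
      show ?thesis using h1 h2 by (simp add: distrib_left)
    qed
    finally have "norm (X x + Y x) powr p \<le> ((A + B) * (t * (norm (X x) / A) + (1 - t) * (norm (Y x) / B))) powr p"
      using p by (intro powr_mono2) auto
    also have "\<dots> = (A + B) powr p * (t * (norm (X x) / A) + (1 - t) * (norm (Y x) / B)) powr p"
      using A0 t01 by (intro powr_mult)
    also have "\<dots> \<le> (A + B) powr p * (t * (norm (X x) / A) powr p + (1 - t) * (norm (Y x) / B) powr p)"
      using A0 t01 p by (intro mult_left_mono powr_convex_ineq) auto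
    also have "\<dots> = c1 * norm (X x) powr p + c2 * norm (Y x) powr p"
      using A0 unfolding c1_def c2_def by (simp add: powr_divide field_simps)
    finally show ?thesis .
  qed
  have "(\<integral>x. norm (X x + Y x) powr p \<partial>M) \<le> (\<integral>x. c1 * norm (X x) powr p + c2 * norm (Y x) powr p \<partial>M)"
    using iX iY iXY pw by (intro integral_mono) auto
  also have "\<dots> = c1 * (\<integral>x. norm (X x) powr p \<partial>M) + c2 * (\<integral>x. norm (Y x) powr p \<partial>M)"
    using iX iY by simp
  also have "\<dots> \<le> c1 * A powr p + c2 * B powr p"
    using EX EY A0 t01 unfolding c1_def c2_def by (intro add_mono mult_left_mono) auto
  also have "\<dots> = (A + B) powr p"
    using A0 t01 unfolding c1_def c2_def by (simp add: field_simps)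
  finally have "Lp_norm M p (\<lambda>x. X x + Y x) powr p \<le> (A + B) powr p"
    unfolding Lp_norm_powr[OF p] .
  have "Lp_norm M p (\<lambda>x. X x + Y x) \<le> A + B"
  proof (rule ccontr)
    assume "\<not> ?thesis"
    then have "(A + B) powr p < Lp_norm M p (\<lambda>x. X x + Y x) powr p"
      using p A0 by (intro powr_less_mono2) auto
    then show False using \<open>Lp_norm M p (\<lambda>x. X x + Y x) powr p \<le> (A + B) powr p\<close> by simp
  qed
  then show "Lp_norm M p (\<lambda>x. X x + Y x) \<le> Lp_norm M p X + Lp_norm M p Y + e"
    unfolding A_def B_def a_def b_def by simp
qed



definition sg :: "nat set \<Rightarrow> nat \<Rightarrow> real" where
  "sg A i = (if i \<in> A then -1 else 1)"

lemma sg_sq: "sg A i * sg A i = 1"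
  by (simp add: sg_def)

lemma sg_pm: "sg A i = 1 \<or> sg A i = -1"
  by (simp add: sg_def)

lemma sign_sum_zero:
  assumes "finite I" "i \<in> I" "i \<noteq> j"
  shows "(\<Sum>A\<in>Pow I. sg A i * sg A j) = 0"
proof -
  define f where "f A = (if i \<in> A then A - {i} else insert i A)" for A
  have bij: "bij_betw f (Pow I) (Pow I)"
    by (rule bij_betw_byWitness[where f' = f]) (auto simp: f_def assms)
  have "(\<Sum>A\<in>Pow I. sg A i * sg A j) = (\<Sum>A\<in>Pow I. sg (f A) i * sg (f A) j)"
    using sum.reindex_bij_betw[OF bij, of "\<lambda>A. sg A i * sg A j"] by simp
  also have "\<dots> = - (\<Sum>A\<in>Pow I. sg A i * sg A j)"
    unfolding sum_negf[symmetric] by (intro sum.cong) (use assms in \<open>auto simp: f_def sg_def\<close>)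
  finally show ?thesis by simp
qed

lemma card_Pow_pos: "finite I \<Longrightarrow> real (card (Pow I)) = 2 ^ card I"
  by (simp add: card_Pow)



lemma distr_lborel_borel: "distr M lborel f = distr M borel f"
  unfolding distr_def by simp

lemma id_meas_PiM:
  "(\<lambda>y. y) \<in> measurable (Pi\<^sub>M I (\<lambda>_. borel)) (borel :: (nat \<Rightarrow> real) measure)"
proof (rule measurable_coordinatewise_then_product)
  fix i :: nat
  show "(\<lambda>x::nat\<Rightarrow>real. x i) \<in> borel_measurable (Pi\<^sub>M I (\<lambda>_. borel))"
  proof (cases "i \<in> I")
    case True
    then show ?thesis by (rule measurable_component_singleton)
  next
    case False
    have "(\<lambda>_. undefined :: real) \<in> borel_measurable (Pi\<^sub>M I (\<lambda>_. (borel :: real measure)))" by simp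
    moreover have "(\<lambda>x. x i) \<in> borel_measurable (Pi\<^sub>M I (\<lambda>_. (borel :: real measure))) \<longleftrightarrow>
        (\<lambda>_. undefined :: real) \<in> borel_measurable (Pi\<^sub>M I (\<lambda>_. (borel :: real measure)))"
      using False by (intro measurable_cong[where M="Pi\<^sub>M I (\<lambda>_. (borel :: real measure))"]) (auto simp: space_PiM PiE_def extensional_def)
    ultimately show ?thesis by simp
  qed
qed

lemma meas_restrict_borel:
  fixes g :: "nat \<Rightarrow> 'a \<Rightarrow> real"
  assumes "\<And>i. i \<in> I \<Longrightarrow> g i \<in> borel_measurable M"
  shows "(\<lambda>x. \<lambda>i\<in>I. g i x) \<in> borel_measurable M"
  using measurable_comp[OF measurable_restrict[of I g M "\<lambda>_. borel"] id_meas_PiM] assms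
  by (simp add: comp_def)

context prob_space
begin

lemma distr_signed_PiM:
  fixes g :: "nat \<Rightarrow> 'a \<Rightarrow> real" and I :: "nat set" and s :: "nat \<Rightarrow> real"
  assumes ne: "I \<noteq> {}"
    and ind: "indep_vars (\<lambda>_. borel) g I"
    and dist: "\<forall>i\<in>I. distributed M lborel (g i) std_normal_density"
    and s: "\<forall>i. s i = 1 \<or> s i = -1"
  shows "distr M (Pi\<^sub>M I (\<lambda>_. borel)) (\<lambda>x. \<lambda>i\<in>I. s i * g i x)
       = Pi\<^sub>M I (\<lambda>_. density lborel std_normal_density)"
proof -
  have meas: "g i \<in> borel_measurable M" if "i \<in> I" for i
    using distributed_measurable[OF dist[rule_format, OF that]] by simp
  have ind2: "indep_vars (\<lambda>_. borel) (\<lambda>i x. s i * g i x) I"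
    by (rule indep_vars_compose2[OF ind]) simp
  have "distr M (Pi\<^sub>M I (\<lambda>_. borel)) (\<lambda>x. \<lambda>i\<in>I. s i * g i x)
      = Pi\<^sub>M I (\<lambda>i. distr M borel (\<lambda>x. s i * g i x))"
    using indep_vars_iff_distr_eq_PiM'[OF ne, where M'="\<lambda>_. borel" and X="\<lambda>i x. s i * g i x"] ind2 meas
    by simp
  also have "\<dots> = Pi\<^sub>M I (\<lambda>_. density lborel std_normal_density)"
  proof (rule PiM_cong)
    fix i assume i: "i \<in> I"
    have "distributed M lborel (\<lambda>x. 0 + s i * g i x) (normal_density (0 + s i * 0) (\<bar>s i\<bar> * 1))"
      by (rule normal_density_affine[OF dist[rule_format, OF i]]) (use s in \<open>auto, metis zero_neq_one zero_neq_neg_one\<close>)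
    moreover have "\<bar>s i\<bar> = 1" using s by (metis abs_minus_cancel abs_one)
    ultimately have "distributed M lborel (\<lambda>x. s i * g i x) std_normal_density" by simp
    then show "distr M borel (\<lambda>x. s i * g i x) = density lborel std_normal_density"
      using distributed_distr_eq_density distr_lborel_borel by metis
  qed simp
  finally show ?thesis .
qed

lemma sign_invariance:
  fixes g :: "nat \<Rightarrow> 'a \<Rightarrow> real" and I :: "nat set" and s :: "nat \<Rightarrow> real"
    and h :: "(nat \<Rightarrow> real) \<Rightarrow> real"
  assumes ne: "I \<noteq> {}"
    and ind: "indep_vars (\<lambda>_. borel) g I"
    and dist: "\<forall>i\<in>I. distributed M lborel (g i) std_normal_density"
    and s: "\<forall>i. s i = 1 \<or> s i = -1"
    and h: "h \<in> borel_measurable borel"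
  shows "integral\<^sup>L M (\<lambda>x. h (\<lambda>i\<in>I. s i * g i x)) = integral\<^sup>L M (\<lambda>x. h (\<lambda>i\<in>I. g i x))"
    and "integrable M (\<lambda>x. h (\<lambda>i\<in>I. s i * g i x)) \<longleftrightarrow> integrable M (\<lambda>x. h (\<lambda>i\<in>I. g i x))"
proof -
  let ?P = "Pi\<^sub>M I (\<lambda>_. borel) :: (nat \<Rightarrow> real) measure"
  have meas: "g i \<in> borel_measurable M" if "i \<in> I" for i
    using distributed_measurable[OF dist[rule_format, OF that]] by simp
  have hP: "h \<in> borel_measurable ?P"
    using measurable_comp[OF id_meas_PiM h] by (simp add: comp_def)
  have Gs: "(\<lambda>x. \<lambda>i\<in>I. s i * g i x) \<in> measurable M ?P"
    using meas by (intro measurable_restrict) simp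
  have G: "(\<lambda>x. \<lambda>i\<in>I. g i x) \<in> measurable M ?P"
    using meas by (intro measurable_restrict) simp
  have eq: "distr M ?P (\<lambda>x. \<lambda>i\<in>I. s i * g i x) = distr M ?P (\<lambda>x. \<lambda>i\<in>I. g i x)"
    using distr_signed_PiM[OF ne ind dist s] distr_signed_PiM[OF ne ind dist, of "\<lambda>_. 1"] by simp
  show "integral\<^sup>L M (\<lambda>x. h (\<lambda>i\<in>I. s i * g i x)) = integral\<^sup>L M (\<lambda>x. h (\<lambda>i\<in>I. g i x))"
    using integral_distr[OF Gs hP] integral_distr[OF G hP] eq by simp
  show "integrable M (\<lambda>x. h (\<lambda>i\<in>I. s i * g i x)) \<longleftrightarrow> integrable M (\<lambda>x. h (\<lambda>i\<in>I. g i x))"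
    using integrable_distr_eq[OF Gs hP] integrable_distr_eq[OF G hP] eq by simp
qed

end



lemma abs_powr_le_poly:
  fixes y q :: real
  assumes "q \<ge> 0"
  shows "\<bar>y\<bar> powr q \<le> 1 + y ^ (2 * nat \<lceil>q\<rceil>)"
proof (cases "\<bar>y\<bar> \<le> 1")
  case True
  have "\<bar>y\<bar> powr q \<le> 1"
    using True assms by (cases "y = 0") (auto intro: powr_le1)
  moreover have "0 \<le> y ^ (2 * nat \<lceil>q\<rceil>)" by (simp add: zero_le_even_power)
  ultimately show ?thesis by linarith
next
  case False
  have "q \<le> real (2 * nat \<lceil>q\<rceil>)" using assms by linarith
  then have "\<bar>y\<bar> powr q \<le> \<bar>y\<bar> powr real (2 * nat \<lceil>q\<rceil>)"
    using False by (intro powr_mono) auto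
  also have "\<dots> = \<bar>y\<bar> ^ (2 * nat \<lceil>q\<rceil>)"
    using False by (subst powr_realpow) auto
  also have "\<dots> = y ^ (2 * nat \<lceil>q\<rceil>)" by (simp add: power_even_abs)
  finally show ?thesis by simp
qed

context prob_space
begin

lemma integrable_normal_abs_powr:
  fixes X :: "'a \<Rightarrow> real"
  assumes dist: "distributed M lborel X std_normal_density" and q: "q \<ge> 0"
  shows "integrable M (\<lambda>x. \<bar>X x\<bar> powr q)"
proof -
  define m where "m = nat \<lceil>q\<rceil>"
  have i0: "integrable lborel (\<lambda>y. std_normal_density y * y ^ (2 * 0))"
    using std_normal_moment_even[of 0] by (rule integrable.intros)
  have im: "integrable lborel (\<lambda>y. std_normal_density y * y ^ (2 * m))"
    using std_normal_moment_even[of m] by (rule integrable.intros)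
  have "integrable lborel (\<lambda>y. std_normal_density y * (1 + y ^ (2 * m)))"
    using Bochner_Integration.integrable_add[OF i0 im] by (simp add: distrib_left)
  then have "integrable lborel (\<lambda>y. std_normal_density y * \<bar>y\<bar> powr q)"
  proof (rule Bochner_Integration.integrable_bound)
    show "(\<lambda>y. std_normal_density y * \<bar>y\<bar> powr q) \<in> borel_measurable lborel" by measurable
    show "AE y in lborel. norm (std_normal_density y * \<bar>y\<bar> powr q)
        \<le> norm (std_normal_density y * (1 + y ^ (2 * m)))"
    proof (rule AE_I2)
      fix y :: real
      have "\<bar>y\<bar> powr q \<le> 1 + y ^ (2 * m)" unfolding m_def by (rule abs_powr_le_poly[OF q])
      moreover have "0 \<le> y ^ (2 * m)" by (simp add: zero_le_even_power)
      ultimately show "norm (std_normal_density y * \<bar>y\<bar> powr q)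
        \<le> norm (std_normal_density y * (1 + y ^ (2 * m)))"
        by (auto simp: abs_mult intro!: mult_left_mono)
    qed
  qed
  then show ?thesis
    using distributed_integrable[OF dist, of "\<lambda>y. \<bar>y\<bar> powr q"] by simp
qed

lemma integrable_quad:
  fixes g :: "nat \<Rightarrow> 'a \<Rightarrow> real" and I :: "nat set"
    and f :: "(nat \<Rightarrow> real) \<Rightarrow> 'c::real_normed_vector"
  assumes fin: "finite I" and I0: "0 \<notin> I"
    and dist: "\<forall>i\<in>I. distributed M lborel (g i) std_normal_density"
    and p: "p \<ge> 1"
    and cont: "continuous_on UNIV f"
    and K: "K \<ge> 0" "\<And>y. norm (f y) \<le> K * (1 + (\<Sum>i\<in>I. (y i)\<^sup>2))"
  shows "integrable M (\<lambda>x. norm (f (\<lambda>i\<in>I. g i x)) powr p)"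
proof -
  have meas: "g i \<in> borel_measurable M" if "i \<in> I" for i
    using distributed_measurable[OF dist[rule_format, OF that]] by simp
  have G: "(\<lambda>x. \<lambda>i\<in>I. g i x) \<in> borel_measurable M"
    by (rule meas_restrict_borel) (rule meas)
  have nf: "(\<lambda>y. norm (f y)) \<in> borel_measurable borel"
    by (rule borel_measurable_continuous_onI) (intro continuous_intros cont)
  have m1: "(\<lambda>x. norm (f (\<lambda>i\<in>I. g i x))) \<in> borel_measurable M"
    using measurable_comp[OF G nf] by (simp add: comp_def)
  define N where "N = real (card (insert 0 I))"
  define C where "C = K powr p * (N powr p / N)"
  have Npos: "N > 0" unfolding N_def using fin by (simp add: card_gt_0_iff)
  have Cnn: "C \<ge> 0" unfolding C_def using Npos by simp
  have iint: "integrable M (\<lambda>x. C * (1 + (\<Sum>i\<in>I. \<bar>g i x\<bar> powr (2 * p))))"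
    using dist p by (intro Bochner_Integration.integrable_mult_right Bochner_Integration.integrable_add
        integrable_const Bochner_Integration.integrable_sum integrable_normal_abs_powr) auto
  show ?thesis
  proof (rule Bochner_Integration.integrable_bound[OF iint])
    show "(\<lambda>x. norm (f (\<lambda>i\<in>I. g i x)) powr p) \<in> borel_measurable M"
      using m1 by measurable
    show "AE x in M. norm (norm (f (\<lambda>i\<in>I. g i x)) powr p)
        \<le> norm (C * (1 + (\<Sum>i\<in>I. \<bar>g i x\<bar> powr (2 * p))))"
    proof (rule AE_I2)
      fix x
      define T where "T = 1 + (\<Sum>i\<in>I. (g i x)\<^sup>2)"
      define z where "z k = (if k = 0 then 1 else (g k x)\<^sup>2)" for k
      have T1: "T \<ge> 1" unfolding T_def by (simp add: sum_nonneg)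
      have sz: "(\<Sum>k\<in>insert 0 I. z k) = T"
        unfolding T_def using fin I0 by (simp add: z_def) (intro sum.cong, auto)
      have szp: "(\<Sum>k\<in>insert 0 I. z k powr p) = 1 + (\<Sum>i\<in>I. \<bar>g i x\<bar> powr (2 * p))"
      proof -
        have "(\<Sum>k\<in>insert 0 I. z k powr p) = 1 + (\<Sum>i\<in>I. z i powr p)"
          using fin I0 by (simp add: z_def)
        also have "(\<Sum>i\<in>I. z i powr p) = (\<Sum>i\<in>I. \<bar>g i x\<bar> powr (2 * p))"
        proof (intro sum.cong refl)
          fix i assume "i \<in> I"
          then have "i \<noteq> 0" using I0 by (metis)
          have "\<bar>g i x\<bar> powr 2 = (g i x)\<^sup>2" by simp
          then have "\<bar>g i x\<bar> powr (2 * p) = (g i x)\<^sup>2 powr p"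
            by (metis powr_powr)
          then show "z i powr p = \<bar>g i x\<bar> powr (2 * p)"
            using \<open>i \<noteq> 0\<close> by (simp add: z_def)
        qed
        finally show ?thesis .
      qed
      have jen: "(T / N) powr p \<le> (1 + (\<Sum>i\<in>I. \<bar>g i x\<bar> powr (2 * p))) / N"
        using jensen_avg_powr[of "insert 0 I" p z] fin p unfolding sz szp N_def
        by (auto simp: z_def)
      have "norm (f (\<lambda>i\<in>I. g i x)) \<le> K * T"
        using K(2)[of "\<lambda>i\<in>I. g i x"] unfolding T_def by simp
      then have "norm (f (\<lambda>i\<in>I. g i x)) powr p \<le> (K * T) powr p"
        using p by (intro powr_mono2) auto
      also have "\<dots> = K powr p * T powr p" using K T1 by (simp add: powr_mult)
      also have "T powr p = N powr p * (T / N) powr p"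
        using Npos T1 by (simp add: powr_divide)
      also have "K powr p * (N powr p * (T / N) powr p)
          \<le> K powr p * (N powr p * ((1 + (\<Sum>i\<in>I. \<bar>g i x\<bar> powr (2 * p))) / N))"
        using jen by (intro mult_left_mono) auto
      also have "\<dots> = C * (1 + (\<Sum>i\<in>I. \<bar>g i x\<bar> powr (2 * p)))"
        unfolding C_def by simp
      finally have b: "norm (f (\<lambda>i\<in>I. g i x)) powr p \<le> C * (1 + (\<Sum>i\<in>I. \<bar>g i x\<bar> powr (2 * p)))" .
      have "0 \<le> C * (1 + (\<Sum>i\<in>I. \<bar>g i x\<bar> powr (2 * p)))"
        using Cnn by (intro mult_nonneg_nonneg add_nonneg_nonneg sum_nonneg) auto
      then show "norm (norm (f (\<lambda>i\<in>I. g i x)) powr p)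
        \<le> norm (C * (1 + (\<Sum>i\<in>I. \<bar>g i x\<bar> powr (2 * p))))"
        using b by simp
    qed
  qed
qed

end



lemma abs_prod_le_sumsq:
  fixes y :: "nat \<Rightarrow> real"
  assumes "finite I" "i \<in> I" "j \<in> I"
  shows "\<bar>y i * y j\<bar> \<le> (\<Sum>k\<in>I. (y k)\<^sup>2)"
proof -
  have "\<bar>y i * y j\<bar> \<le> max ((y i)\<^sup>2) ((y j)\<^sup>2)"
  proof -
    have "2 * \<bar>y i * y j\<bar> \<le> (y i)\<^sup>2 + (y j)\<^sup>2"
    proof -
      have "0 \<le> (\<bar>y i\<bar> - \<bar>y j\<bar>)\<^sup>2" by simp
      then show ?thesis by (simp add: power2_eq_square abs_mult algebra_simps)
    qed
    then show ?thesis by linarith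
  qed
  also have "\<dots> \<le> (\<Sum>k\<in>I. (y k)\<^sup>2)"
    using assms by (auto intro!: member_le_sum)
  finally show ?thesis .
qed

lemma norm_double_sum_le:
  fixes v :: "nat \<Rightarrow> nat \<Rightarrow> 'a::real_normed_vector"
  assumes "\<And>i j. i \<in> I \<Longrightarrow> j \<in> J i \<Longrightarrow> \<bar>c i j\<bar> \<le> T"
  shows "norm (\<Sum>i\<in>I. \<Sum>j\<in>J i. c i j *\<^sub>R v i j) \<le> T * (\<Sum>i\<in>I. \<Sum>j\<in>J i. norm (v i j))"
proof -
  have "norm (\<Sum>i\<in>I. \<Sum>j\<in>J i. c i j *\<^sub>R v i j) \<le> (\<Sum>i\<in>I. \<Sum>j\<in>J i. norm (c i j *\<^sub>R v i j))"
    by (rule order_trans[OF norm_sum]) (intro sum_mono norm_sum)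
  also have "\<dots> \<le> (\<Sum>i\<in>I. \<Sum>j\<in>J i. T * norm (v i j))"
    using assms by (intro sum_mono) (auto intro!: mult_right_mono)
  also have "\<dots> = T * (\<Sum>i\<in>I. \<Sum>j\<in>J i. norm (v i j))"
    by (simp add: sum_distrib_left)
  finally show ?thesis .
qed



theorem lemma3p1:
  fixes M :: "'b measure" and a :: "nat \<Rightarrow> nat \<Rightarrow> 'a::real_normed_vector"
    and g :: "nat \<Rightarrow> 'b \<Rightarrow> real" and n :: nat and p :: real
  assumes "prob_space M"
    and "\<forall>i\<in>{1..n}. \<forall>j\<in>{1..n}. a i j = a j i"
    and "prob_space.indep_vars M (\<lambda>_. borel) g {1..n}"
    and "\<forall>i\<in>{1..n}. distributed M lborel (g i) std_normal_density"
    and "p \<ge> 1"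
  defines "W \<equiv> Lp_norm M p (\<lambda>x. \<Sum>i\<in>{1..n}. \<Sum>j\<in>{1..n} - {i}. (g i x * g j x) *\<^sub>R a i j)
              + Lp_norm M p (\<lambda>x. \<Sum>i\<in>{1..n}. (g i x ^ 2 - 1) *\<^sub>R a i i)"
  shows "W / 3 \<le> Lp_norm M p (\<lambda>x. \<Sum>i\<in>{1..n}. \<Sum>j\<in>{1..n}. (g i x * g j x - (if i = j then 1 else 0)) *\<^sub>R a i j)
       \<and> Lp_norm M p (\<lambda>x. \<Sum>i\<in>{1..n}. \<Sum>j\<in>{1..n}. (g i x * g j x - (if i = j then 1 else 0)) *\<^sub>R a i j) \<le> W"
proof -
  interpret P: prob_space M by fact
  have p: "p \<ge> 1" by fact
  define I where "I = {1..n}"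
  define fS where "fS y = (\<Sum>i\<in>I. \<Sum>j\<in>I. (y i * y j - (if i = j then 1 else 0)) *\<^sub>R a i j)" for y :: "nat \<Rightarrow> real"
  define fO where "fO y = (\<Sum>i\<in>I. \<Sum>j\<in>I - {i}. (y i * y j) *\<^sub>R a i j)" for y :: "nat \<Rightarrow> real"
  define fD where "fD y = (\<Sum>i\<in>I. (y i ^ 2 - 1) *\<^sub>R a i i)" for y :: "nat \<Rightarrow> real"
  define Y where "Y x = (\<lambda>i\<in>I. g i x)" for x
  have eS: "(\<lambda>x. \<Sum>i\<in>{1..n}. \<Sum>j\<in>{1..n}. (g i x * g j x - (if i = j then 1 else 0)) *\<^sub>R a i j) = (\<lambda>x. fS (Y x))"
    unfolding fS_def Y_def I_def by (intro ext sum.cong refl) auto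
  have eO: "(\<lambda>x. \<Sum>i\<in>{1..n}. \<Sum>j\<in>{1..n} - {i}. (g i x * g j x) *\<^sub>R a i j) = (\<lambda>x. fO (Y x))"
    unfolding fO_def Y_def I_def by (intro ext sum.cong refl) auto
  have eD: "(\<lambda>x. \<Sum>i\<in>{1..n}. (g i x ^ 2 - 1) *\<^sub>R a i i) = (\<lambda>x. fD (Y x))"
    unfolding fD_def Y_def I_def by (intro ext sum.cong refl) auto
  have W_eq: "W = Lp_norm M p (\<lambda>x. fO (Y x)) + Lp_norm M p (\<lambda>x. fD (Y x))"
    unfolding W_def eO eD ..
  have fin: "finite I" and I0: "0 \<notin> I" unfolding I_def by auto
  have split: "fS y = fO y + fD y" for y
  proof -
    have "fS y = (\<Sum>i\<in>I. (\<Sum>j\<in>I - {i}. (y i * y j) *\<^sub>R a i j) + (y i ^ 2 - 1) *\<^sub>R a i i)"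
      unfolding fS_def
    proof (intro sum.cong refl)
      fix i assume i: "i \<in> I"
      have "(\<Sum>j\<in>I. (y i * y j - (if i = j then 1 else 0)) *\<^sub>R a i j)
          = (y i * y i - 1) *\<^sub>R a i i + (\<Sum>j\<in>I - {i}. (y i * y j - (if i = j then 1 else 0)) *\<^sub>R a i j)"
        using fin i by (subst sum.remove) auto
      also have "(\<Sum>j\<in>I - {i}. (y i * y j - (if i = j then 1 else 0)) *\<^sub>R a i j) = (\<Sum>j\<in>I - {i}. (y i * y j) *\<^sub>R a i j)"
        by (intro sum.cong refl) auto
      finally show "(\<Sum>j\<in>I. (y i * y j - (if i = j then 1 else 0)) *\<^sub>R a i j)
          = (\<Sum>j\<in>I - {i}. (y i * y j) *\<^sub>R a i j) + (y i ^ 2 - 1) *\<^sub>R a i i"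
        by (simp add: power2_eq_square)
    qed
    also have "\<dots> = fO y + fD y" unfolding fO_def fD_def by (simp add: sum.distrib)
    finally show ?thesis .
  qed
  show ?thesis
  proof (cases "n = 0")
    case True
    then have "I = {}" unfolding I_def by simp
    then show ?thesis unfolding eS W_eq fS_def fO_def fD_def Lp_norm_def using p by simp
  next
    case False
    then have ne: "I \<noteq> {}" unfolding I_def by simp
    have ind: "P.indep_vars (\<lambda>_. borel) g I" using assms(3) unfolding I_def .
    have dist: "\<forall>i\<in>I. distributed M lborel (g i) std_normal_density" using assms(4) unfolding I_def .
    define T where "T y = 1 + (\<Sum>k\<in>I. (y k)\<^sup>2)" for y :: "nat \<Rightarrow> real"
    have sq_le: "(y i)\<^sup>2 \<le> (\<Sum>k\<in>I. (y k)\<^sup>2)" if "i \<in> I" for y :: "nat \<Rightarrow> real" and i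
      using fin that by (intro member_le_sum) auto
    have bS: "norm (fS y) \<le> (\<Sum>i\<in>I. \<Sum>j\<in>I. norm (a i j)) * (1 + (\<Sum>k\<in>I. (y k)\<^sup>2))" for y
    proof -
      have "norm (fS y) \<le> T y * (\<Sum>i\<in>I. \<Sum>j\<in>I. norm (a i j))"
        unfolding fS_def
      proof (rule norm_double_sum_le)
        fix i j assume "i \<in> I" "j \<in> I"
        then have "\<bar>y i * y j\<bar> \<le> (\<Sum>k\<in>I. (y k)\<^sup>2)" by (intro abs_prod_le_sumsq fin)
        then show "\<bar>y i * y j - (if i = j then 1 else 0)\<bar> \<le> T y"
          unfolding T_def using zero_le_square[of "y i"] by (auto simp: abs_le_iff)
      qed
      then show ?thesis unfolding T_def by (simp add: mult.commute)
    qed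
    have bO: "norm (fO y) \<le> (\<Sum>i\<in>I. \<Sum>j\<in>I - {i}. norm (a i j)) * (1 + (\<Sum>k\<in>I. (y k)\<^sup>2))" for y
    proof -
      have "norm (fO y) \<le> T y * (\<Sum>i\<in>I. \<Sum>j\<in>I - {i}. norm (a i j))"
        unfolding fO_def
      proof (rule norm_double_sum_le)
        fix i j assume "i \<in> I" "j \<in> I - {i}"
        then have "\<bar>y i * y j\<bar> \<le> (\<Sum>k\<in>I. (y k)\<^sup>2)" by (intro abs_prod_le_sumsq fin) auto
        then show "\<bar>y i * y j\<bar> \<le> T y" unfolding T_def by auto
      qed
      then show ?thesis unfolding T_def by (simp add: mult.commute)
    qed
    have bD: "norm (fD y) \<le> (\<Sum>i\<in>I. norm (a i i)) * (1 + (\<Sum>k\<in>I. (y k)\<^sup>2))" for y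
    proof -
      have "norm (fD y) \<le> (\<Sum>i\<in>I. norm ((y i ^ 2 - 1) *\<^sub>R a i i))"
        unfolding fD_def by (rule norm_sum)
      also have "\<dots> \<le> (\<Sum>i\<in>I. T y * norm (a i i))"
      proof (intro sum_mono)
        fix i assume i: "i \<in> I"
        have "\<bar>y i ^ 2 - 1\<bar> \<le> T y" using sq_le[OF i, of y] zero_le_power2[of "y i"] unfolding T_def abs_le_iff by linarith
        then show "norm ((y i ^ 2 - 1) *\<^sub>R a i i) \<le> T y * norm (a i i)"
          by (auto intro!: mult_right_mono)
      qed
      finally show ?thesis unfolding T_def by (simp add: sum_distrib_right mult.commute)
    qed
    have cS: "continuous_on UNIV fS" unfolding fS_def
      by (intro continuous_intros continuous_on_product_coordinates)
    have cO: "continuous_on UNIV fO" unfolding fO_def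
      by (intro continuous_intros continuous_on_product_coordinates)
    have cD: "continuous_on UNIV fD" unfolding fD_def
      by (intro continuous_intros continuous_on_product_coordinates)
    have iS: "integrable M (\<lambda>x. norm (fS (Y x)) powr p)"
      unfolding Y_def by (rule P.integrable_quad[OF fin I0 dist p cS _ bS]) (simp add: sum_nonneg)
    have iO: "integrable M (\<lambda>x. norm (fO (Y x)) powr p)"
      unfolding Y_def by (rule P.integrable_quad[OF fin I0 dist p cO _ bO]) (simp add: sum_nonneg)
    have iD: "integrable M (\<lambda>x. norm (fD (Y x)) powr p)"
      unfolding Y_def by (rule P.integrable_quad[OF fin I0 dist p cD _ bD]) (simp add: sum_nonneg)
    have hS0: "(\<lambda>y. norm (fS y)) \<in> borel_measurable borel"
      by (rule borel_measurable_continuous_onI) (intro continuous_intros cS)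
    have hS: "(\<lambda>y. norm (fS y) powr p) \<in> borel_measurable borel"
      using hS0 by measurable
    define YA where "YA A x = (\<lambda>i\<in>I. sg A i * g i x)" for A x
    have sA: "\<forall>i. sg A i = 1 \<or> sg A i = -1" for A by (simp add: sg_pm)
    have invA: "integral\<^sup>L M (\<lambda>x. norm (fS (YA A x)) powr p) = integral\<^sup>L M (\<lambda>x. norm (fS (Y x)) powr p)" for A
      unfolding YA_def Y_def by (rule P.sign_invariance(1)[OF ne ind dist sA hS])
    have intA: "integrable M (\<lambda>x. norm (fS (YA A x)) powr p)" for A
      using P.sign_invariance(2)[OF ne ind dist sA hS, of A] iS unfolding YA_def Y_def by simp
    have sumA: "(\<Sum>A\<in>Pow I. fS (\<lambda>i. sg A i * y i)) = real (card (Pow I)) *\<^sub>R fD y" for y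
    proof -
      have coef: "(\<Sum>A\<in>Pow I. sg A i * y i * (sg A j * y j) - (if i = j then 1 else 0))
          = (if i = j then real (card (Pow I)) * (y i ^ 2 - 1) else 0)" if "i \<in> I" "j \<in> I" for i j
      proof (cases "i = j")
        case True
        then show ?thesis
          using sg_sq by (simp add: power2_eq_square algebra_simps)
      next
        case False
        have "(\<Sum>A\<in>Pow I. sg A i * y i * (sg A j * y j)) = (\<Sum>A\<in>Pow I. sg A i * sg A j) * (y i * y j)"
          by (simp add: sum_distrib_left mult_ac)
        also have "\<dots> = 0" using sign_sum_zero[OF fin that(1) False] by simp
        finally show ?thesis using False by (simp add: sum_subtractf)
      qed
      have "(\<Sum>A\<in>Pow I. fS (\<lambda>i. sg A i * y i))
          = (\<Sum>i\<in>I. \<Sum>j\<in>I. (\<Sum>A\<in>Pow I. sg A i * y i * (sg A j * y j) - (if i = j then 1 else 0)) *\<^sub>R a i j)"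
        unfolding fS_def scaleR_sum_left
        by (subst sum.swap, intro sum.cong refl, subst sum.swap, rule refl)
      also have "\<dots> = (\<Sum>i\<in>I. \<Sum>j\<in>I. (if j = i then real (card (Pow I)) *\<^sub>R ((y i ^ 2 - 1) *\<^sub>R a i i) else 0))"
        by (intro sum.cong refl) (auto simp: coef)
      also have "\<dots> = real (card (Pow I)) *\<^sub>R fD y"
        unfolding fD_def scaleR_sum_right using fin by simp
      finally show ?thesis .
    qed
    have cardpos: "real (card (Pow I)) > 0" using fin by (simp add: card_gt_0_iff Pow_not_empty)
    have avg: "norm (fD (Y x)) powr p \<le> (\<Sum>A\<in>Pow I. norm (fS (YA A x)) powr p) / real (card (Pow I))" for x
    proof -
      have fe: "fS (YA A x) = fS (\<lambda>i. sg A i * Y x i)" for A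
        unfolding fS_def YA_def Y_def by (intro sum.cong refl) auto
      have "fD (Y x) = (1 / real (card (Pow I))) *\<^sub>R (\<Sum>A\<in>Pow I. fS (YA A x))"
        unfolding fe sumA using cardpos by simp
      then have "norm (fD (Y x)) = (norm (\<Sum>A\<in>Pow I. fS (YA A x))) / real (card (Pow I))"
        using cardpos by simp
      also have "\<dots> \<le> (\<Sum>A\<in>Pow I. norm (fS (YA A x))) / real (card (Pow I))"
        using cardpos by (intro divide_right_mono norm_sum) auto
      finally have "norm (fD (Y x)) powr p \<le> ((\<Sum>A\<in>Pow I. norm (fS (YA A x))) / real (card (Pow I))) powr p"
        using p by (intro powr_mono2) auto
      also have "\<dots> \<le> (\<Sum>A\<in>Pow I. norm (fS (YA A x)) powr p) / real (card (Pow I))"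
        using fin p by (intro jensen_avg_powr) auto
      finally show ?thesis .
    qed
    have ED: "(\<integral>x. norm (fD (Y x)) powr p \<partial>M) \<le> (\<integral>x. norm (fS (Y x)) powr p \<partial>M)"
    proof -
      have "(\<integral>x. norm (fD (Y x)) powr p \<partial>M)
          \<le> (\<integral>x. (\<Sum>A\<in>Pow I. norm (fS (YA A x)) powr p) / real (card (Pow I)) \<partial>M)"
        using iD intA avg by (intro integral_mono) auto
      also have "\<dots> = (\<Sum>A\<in>Pow I. (\<integral>x. norm (fS (YA A x)) powr p \<partial>M)) / real (card (Pow I))"
        using intA by simp
      also have "\<dots> = (\<integral>x. norm (fS (Y x)) powr p \<partial>M)"
        unfolding invA using cardpos by simp
      finally show ?thesis .
    qed
    have LD: "Lp_norm M p (\<lambda>x. fD (Y x)) \<le> Lp_norm M p (\<lambda>x. fS (Y x))"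
      unfolding Lp_norm_def using ED p
      by (intro powr_mono2) (auto intro: Bochner_Integration.integral_nonneg)
    have up: "Lp_norm M p (\<lambda>x. fS (Y x)) \<le> Lp_norm M p (\<lambda>x. fO (Y x)) + Lp_norm M p (\<lambda>x. fD (Y x))"
      using minkowski[OF p iO iD] iS unfolding split by simp
    have lo: "Lp_norm M p (\<lambda>x. fO (Y x)) \<le> Lp_norm M p (\<lambda>x. fS (Y x)) + Lp_norm M p (\<lambda>x. fD (Y x))"
    proof -
      have iD': "integrable M (\<lambda>x. norm (- fD (Y x)) powr p)" using iD by simp
      have e1: "(\<lambda>x. fS (Y x) + - fD (Y x)) = (\<lambda>x. fO (Y x))" unfolding split by auto
      have e2: "Lp_norm M p (\<lambda>x. - fD (Y x)) = Lp_norm M p (\<lambda>x. fD (Y x))"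
        unfolding Lp_norm_def by simp
      have iO': "integrable M (\<lambda>x. norm (fS (Y x) + - fD (Y x)) powr p)" using iO by (simp add: split)
      show ?thesis using minkowski[OF p iS iD' iO'] unfolding e1 e2 .
    qed
    show ?thesis unfolding eS W_eq using up lo LD by simp
  qed
qed


end
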